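(* There exists $\varepsilon_0>0$ such that for every $\varepsilon\in(0,\varepsilon_0)$ the following holds. Let $\mathbf{U}$ be the $7\times 7$ matrix $$\mathbf{U}=\begin{pmatrix} 0 & -1 & \varepsilon & -10 & -\tfrac13+\varepsilon & -\tfrac13+\varepsilon & -\tfrac13+\varepsilon\\ \varepsilon & 0 & -1 & -10 & -\tfrac13+\varepsilon & -\tfrac13+\varepsilon & -\tfrac13+\varepsilon\\ -1 & \varepsilon & 0 & -10 & -\tfrac13+\varepsilon & -\tfrac13+\varepsilon & -\tfrac13+\varepsilon\\ -2 & -2 & 2 & 0 & -\tfrac13 & -\tfrac13 & -\tfrac13\\ -\tfrac13 & -\tfrac13 & -\tfrac13 & 10 & 0 & -1 & \varepsilon\\ -\tfrac13 & -\tfrac13 & -\tfrac13 & 10 & \varepsilon & 0 & -1\\ -\tfrac13 & -\tfrac13 & -\tfrac13 & 10 & -1 & \varepsilon & 0 \end{pmatrix},$$ and let $(\mathbf{x},\mathbf{y})$ be a Nash equilibrium of the symmetric game with payoff matrix $\mathbf{U}$. If $x_1+x_2+x_3>0$ and $y_1+y_2+y_3>0$, then $x_1=x_2=x_3$ and $y_1=y_2=y_3$. If $x_5+x_6+x_7>0$ and $y_5+y_6+y_7>0$, then $x_5=x_6=x_7$ and $y_5=y_6=y_7$.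
   Context: Mixed strategies are elements of $S_7=\{\mathbf{x}\in\mathbb{R}_+^7:\sum_i x_i=1\}$; for the profile $(\mathbf{x},\mathbf{y})$ the row player gets $\mathbf{x}\cdot\mathbf{U}\mathbf{y}$ and the column player gets $\mathbf{y}\cdot\mathbf{U}\mathbf{x}$. The paper assumes throughout that $\varepsilon>0$ is "small enough". *)

theory Defs
  imports Complex_Main
begin

text \<open>Strategies and matrices indexed by {1..7}; a strategy is a function nat => real,
  only its values on {1..7} matter.\<close>

definition simplex7 :: "(nat \<Rightarrow> real) set" where
  "simplex7 = {x. (\<forall>i\<in>{1..7}. 0 \<le> x i) \<and> (\<Sum>i=1..7. x i) = 1}"

definition payoff :: "(nat \<Rightarrow> nat \<Rightarrow> real) \<Rightarrow> (nat \<Rightarrow> real) \<Rightarrow> (nat \<Rightarrow> real) \<Rightarrow> real" where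
  "payoff U x y = (\<Sum>i=1..7. \<Sum>j=1..7. x i * U i j * y j)"

definition nash_eq :: "(nat \<Rightarrow> nat \<Rightarrow> real) \<Rightarrow> (nat \<Rightarrow> real) \<Rightarrow> (nat \<Rightarrow> real) \<Rightarrow> bool" where
  "nash_eq U x y \<longleftrightarrow> x \<in> simplex7 \<and> y \<in> simplex7 \<and>
     (\<forall>x'\<in>simplex7. payoff U x' y \<le> payoff U x y) \<and>
     (\<forall>y'\<in>simplex7. payoff U y' x \<le> payoff U y x)"

definition Umat :: "real \<Rightarrow> nat \<Rightarrow> nat \<Rightarrow> real" where
  "Umat e i j =
    (let a = -1/3 + e; t = -1/3 in
     [[0, -1, e, -10, a, a, a],
      [e, 0, -1, -10, a, a, a],
      [-1, e, 0, -10, a, a, a],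
      [-2, -2, 2, 0, t, t, t],
      [t, t, t, 10, 0, -1, e],
      [t, t, t, 10, e, 0, -1],
      [t, t, t, 10, -1, e, 0]] ! (i - 1) ! (j - 1))"

end

theory Submission
  imports Defs
begin

definition good :: "real \<Rightarrow> real \<Rightarrow> real \<Rightarrow> real \<Rightarrow> real \<Rightarrow> real \<Rightarrow> real \<Rightarrow> bool" where
  "good e p1 p2 p3 r1 r2 r3 \<longleftrightarrow>
    (0 < r1 \<longrightarrow> -p2 + e*p3 \<ge> -p3 + e*p1 \<and> -p2 + e*p3 \<ge> -p1 + e*p2) \<and>
    (0 < r2 \<longrightarrow> -p3 + e*p1 \<ge> -p2 + e*p3 \<and> -p3 + e*p1 \<ge> -p1 + e*p2) \<and>
    (0 < r3 \<longrightarrow> -p1 + e*p2 \<ge> -p2 + e*p3 \<and> -p1 + e*p2 \<ge> -p3 + e*p1) \<and>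
    (0 < p1 \<longrightarrow> -r2 + e*r3 \<ge> -r3 + e*r1 \<and> -r2 + e*r3 \<ge> -r1 + e*r2) \<and>
    (0 < p2 \<longrightarrow> -r3 + e*r1 \<ge> -r2 + e*r3 \<and> -r3 + e*r1 \<ge> -r1 + e*r2) \<and>
    (0 < p3 \<longrightarrow> -r1 + e*r2 \<ge> -r2 + e*r3 \<and> -r1 + e*r2 \<ge> -r3 + e*r1)"

lemma good_rot: "good e p1 p2 p3 r1 r2 r3 \<Longrightarrow> good e p2 p3 p1 r2 r3 r1"
  unfolding good_def by auto

lemma good_swap: "good e p1 p2 p3 r1 r2 r3 \<Longrightarrow> good e r1 r2 r3 p1 p2 p3"
  unfolding good_def by auto

lemma zero_step:
  fixes e p1 p2 p3 r2 :: real
  assumes "e > 0" "p2 \<ge> 0" "p3 \<ge> 0" "p1 + p2 + p3 > 0" "r2 \<ge> 0"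
    "r2 > 0 \<longrightarrow> -p3 + e*p1 \<ge> -p1 + e*p2" "p1 = 0"
  shows "r2 = 0"
proof (rule ccontr)
  assume "r2 \<noteq> 0"
  with assms have "r2 > 0" by auto
  with assms have h: "-p3 \<ge> e*p2" by auto
  have "e*p2 \<ge> 0" using assms by simp
  with h assms have "p3 = 0" by linarith
  from \<open>e*p2 \<ge> 0\<close> h assms(3) have "e*p2 = 0" by linarith
  with assms have "p2 = 0" by simp
  with assms \<open>p3 = 0\<close> show False by simp
qed

lemma pos1:
  fixes e :: real
  assumes g: "good e p1 p2 p3 r1 r2 r3" and e: "e > 0"
    and nn: "p1 \<ge> 0" "p2 \<ge> 0" "p3 \<ge> 0" "r1 \<ge> 0" "r2 \<ge> 0" "r3 \<ge> 0"
    and s: "p1 + p2 + p3 > 0" "r1 + r2 + r3 > 0"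
  shows "p1 > 0"
proof (rule ccontr)
  assume "\<not> p1 > 0"
  with nn have z1: "p1 = 0" by simp
  have a: "r2 = 0"
    by (rule zero_step[of e p2 p3 p1 r2]) (use g e nn s z1 in \<open>auto simp: good_def\<close>)
  have b: "p3 = 0"
    by (rule zero_step[of e r3 r1 r2 p3]) (use g e nn s a in \<open>auto simp: good_def\<close>)
  have c: "r1 = 0"
    by (rule zero_step[of e p1 p2 p3 r1]) (use g e nn s b in \<open>auto simp: good_def\<close>)
  have d: "p2 = 0"
    by (rule zero_step[of e r2 r3 r1 p2]) (use g e nn s c in \<open>auto simp: good_def\<close>)
  from z1 b d s show False by simp
qed

lemma unif:
  fixes e p1 p2 p3 :: real
  assumes e: "e > 0" and h1: "-p2 + e*p3 = -p3 + e*p1" and h2: "-p3 + e*p1 = -p1 + e*p2"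
  shows "p1 = p2 \<and> p2 = p3"
proof -
  have eq: "(1+e+e^2)*(p1-p3) = ((1+e)*p1 - p3 - e*p2) - e*((1+e)*p3 - p2 - e*p1)"
    by (simp add: algebra_simps power2_eq_square)
  have "(1+e)*p1 - p3 - e*p2 = 0" using h2 by (simp add: algebra_simps)
  moreover have "(1+e)*p3 - p2 - e*p1 = 0" using h1 by (simp add: algebra_simps)
  ultimately have "(1+e+e^2)*(p1-p3) = 0" using eq by simp
  moreover have "1+e+e^2 > 0" using e by (simp add: add_pos_nonneg)
  ultimately have "p1 = p3" by simp
  with h1 have "(1+e)*p3 = p2 + e*p3" by (simp add: algebra_simps)
  hence "p2 = p3" by (simp add: algebra_simps)
  with \<open>p1 = p3\<close> show ?thesis by simp
qed

lemma core:
  fixes e :: real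
  assumes g: "good e p1 p2 p3 r1 r2 r3" and e: "e > 0"
    and nn: "p1 \<ge> 0" "p2 \<ge> 0" "p3 \<ge> 0" "r1 \<ge> 0" "r2 \<ge> 0" "r3 \<ge> 0"
    and s: "p1 + p2 + p3 > 0" "r1 + r2 + r3 > 0"
  shows "p1 = p2 \<and> p2 = p3 \<and> r1 = r2 \<and> r2 = r3"
proof -
  have g2: "good e p2 p3 p1 r2 r3 r1" using good_rot[OF g] .
  have g3: "good e p3 p1 p2 r3 r1 r2" using good_rot[OF g2] .
  have pp1: "p1 > 0" by (rule pos1[OF g e nn s])
  have pp2: "p2 > 0" by (rule pos1[OF g2 e]) (use nn s in auto)
  have pp3: "p3 > 0" by (rule pos1[OF g3 e]) (use nn s in auto)
  have rr1: "r1 > 0" by (rule pos1[OF good_swap[OF g] e]) (use nn s in auto)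
  have rr2: "r2 > 0" by (rule pos1[OF good_swap[OF g2] e]) (use nn s in auto)
  have rr3: "r3 > 0" by (rule pos1[OF good_swap[OF g3] e]) (use nn s in auto)
  have "-p2 + e*p3 = -p3 + e*p1" "-p3 + e*p1 = -p1 + e*p2"
    using g rr1 rr2 rr3 unfolding good_def by (auto intro: order.antisym)
  hence A: "p1 = p2 \<and> p2 = p3" by (rule unif[OF e])
  have "-r2 + e*r3 = -r3 + e*r1" "-r3 + e*r1 = -r1 + e*r2"
    using g pp1 pp2 pp3 unfolding good_def by (auto intro: order.antisym)
  hence B: "r1 = r2 \<and> r2 = r3" by (rule unif[OF e])
  from A B show ?thesis by simp
qed

definition rv :: "(nat \<Rightarrow> nat \<Rightarrow> real) \<Rightarrow> (nat \<Rightarrow> real) \<Rightarrow> nat \<Rightarrow> real" where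
  "rv U y i = (\<Sum>j=1..7. U i j * y j)"

lemma payoff_rv: "payoff U x y = (\<Sum>i=1..7. x i * rv U y i)"
  unfolding payoff_def rv_def by (simp add: sum_distrib_left mult.assoc)

lemma br:
  assumes x: "x \<in> simplex7" and opt: "\<forall>x'\<in>simplex7. payoff U x' y \<le> payoff U x y"
    and i: "i \<in> {1..7}" and j: "j \<in> {1..7}" and pos: "x i > 0"
  shows "rv U y j \<le> rv U y i"
proof (cases "i = j")
  case True then show ?thesis by simp
next
  case False
  define x' where "x' = (\<lambda>k. x k + (if k = j then x i else 0) - (if k = i then x i else 0))"
  have sx: "(\<Sum>k=1..7. x k) = 1" and nx: "\<forall>k\<in>{1..7}. 0 \<le> x k" using x by (auto simp: simplex7_def)
  have "(\<Sum>k=1..7. x' k) = (\<Sum>k=1..7. x k) + (\<Sum>k=1..7. (if k = j then x i else 0)) - (\<Sum>k=1..7. (if k = i then x i else 0))"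
    unfolding x'_def by (simp add: sum.distrib sum_subtractf)
  also have "\<dots> = 1" using sx i j by simp
  finally have s1: "(\<Sum>k=1..7. x' k) = 1" .
  have "\<forall>k\<in>{1..7}. 0 \<le> x' k" using nx False pos unfolding x'_def by auto
  with s1 have "x' \<in> simplex7" by (simp add: simplex7_def)
  with opt have le: "payoff U x' y \<le> payoff U x y" by blast
  have "payoff U x' y = (\<Sum>k=1..7. x k * rv U y k + (if k = j then x i * rv U y j else 0) - (if k = i then x i * rv U y i else 0))"
    unfolding payoff_rv x'_def by (rule sum.cong) (auto simp: algebra_simps)
  also have "\<dots> = payoff U x y + x i * rv U y j - x i * rv U y i"
    unfolding payoff_rv using i j by (simp add: sum.distrib sum_subtractf)
  finally have "x i * rv U y j \<le> x i * rv U y i" using le by simp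
  with pos show ?thesis by simp
qed

lemma set7: "{1..7::nat} = {1,2,3,4,5,6,7}" by auto

lemma rvU:
  "rv (Umat e) y 1 = -y 2 + e*y 3 - 10*y 4 + (-1/3+e)*(y 5 + y 6 + y 7)"
  "rv (Umat e) y 2 = -y 3 + e*y 1 - 10*y 4 + (-1/3+e)*(y 5 + y 6 + y 7)"
  "rv (Umat e) y 3 = -y 1 + e*y 2 - 10*y 4 + (-1/3+e)*(y 5 + y 6 + y 7)"
  "rv (Umat e) y 5 = -y 6 + e*y 7 + 10*y 4 - 1/3*(y 1 + y 2 + y 3)"
  "rv (Umat e) y 6 = -y 7 + e*y 5 + 10*y 4 - 1/3*(y 1 + y 2 + y 3)"
  "rv (Umat e) y 7 = -y 5 + e*y 6 + 10*y 4 - 1/3*(y 1 + y 2 + y 3)"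
  unfolding rv_def set7 by (simp_all add: Umat_def Let_def algebra_simps)

theorem lemma5:
  "\<exists>e0>0. \<forall>e. 0 < e \<and> e < e0 \<longrightarrow>
     (\<forall>x y. nash_eq (Umat e) x y \<longrightarrow>
        ((x 1 + x 2 + x 3 > 0 \<and> y 1 + y 2 + y 3 > 0 \<longrightarrow>
            x 1 = x 2 \<and> x 2 = x 3 \<and> y 1 = y 2 \<and> y 2 = y 3) \<and>
         (x 5 + x 6 + x 7 > 0 \<and> y 5 + y 6 + y 7 > 0 \<longrightarrow>
            x 5 = x 6 \<and> x 6 = x 7 \<and> y 5 = y 6 \<and> y 6 = y 7)))"
proof (rule exI[of _ "1::real"], intro conjI[OF zero_less_one] allI impI)
  fix e :: real and x y
  assume e: "0 < e \<and> e < 1" and ne: "nash_eq (Umat e) x y"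
  have e0: "e > 0" using e by simp
  have xs: "x \<in> simplex7" and ys: "y \<in> simplex7"
    and ox: "\<forall>x'\<in>simplex7. payoff (Umat e) x' y \<le> payoff (Umat e) x y"
    and oy: "\<forall>y'\<in>simplex7. payoff (Umat e) y' x \<le> payoff (Umat e) y x"
    using ne by (auto simp: nash_eq_def)
  have nx: "\<And>k. k \<in> {1..7} \<Longrightarrow> 0 \<le> x k" and ny: "\<And>k. k \<in> {1..7} \<Longrightarrow> 0 \<le> y k"
    using xs ys by (auto simp: simplex7_def)
  have BX: "\<And>i j. i \<in> {1..7} \<Longrightarrow> j \<in> {1..7} \<Longrightarrow> x i > 0 \<Longrightarrow> rv (Umat e) y j \<le> rv (Umat e) y i"
    using br[OF xs ox] by blast
  have BY: "\<And>i j. i \<in> {1..7} \<Longrightarrow> j \<in> {1..7} \<Longrightarrow> y i > 0 \<Longrightarrow> rv (Umat e) x j \<le> rv (Umat e) x i"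
    using br[OF ys oy] by blast
  have c1: "x 1 + x 2 + x 3 > 0 \<and> y 1 + y 2 + y 3 > 0 \<longrightarrow> x 1 = x 2 \<and> x 2 = x 3 \<and> y 1 = y 2 \<and> y 2 = y 3"
  proof
    assume "x 1 + x 2 + x 3 > 0 \<and> y 1 + y 2 + y 3 > 0"
    moreover have "good e (y 1) (y 2) (y 3) (x 1) (x 2) (x 3)"
      unfolding good_def using BX[of 1 2, unfolded rvU] BX[of 1 3, unfolded rvU] BX[of 2 1, unfolded rvU] BX[of 2 3, unfolded rvU] BX[of 3 1, unfolded rvU] BX[of 3 2, unfolded rvU]
        BY[of 1 2, unfolded rvU] BY[of 1 3, unfolded rvU] BY[of 2 1, unfolded rvU] BY[of 2 3, unfolded rvU] BY[of 3 1, unfolded rvU] BY[of 3 2, unfolded rvU]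
      by (simp add: algebra_simps)
    ultimately have "y 1 = y 2 \<and> y 2 = y 3 \<and> x 1 = x 2 \<and> x 2 = x 3"
      using core[OF _ e0] nx ny by auto
    then show "x 1 = x 2 \<and> x 2 = x 3 \<and> y 1 = y 2 \<and> y 2 = y 3" by simp
  qed
  have c2: "x 5 + x 6 + x 7 > 0 \<and> y 5 + y 6 + y 7 > 0 \<longrightarrow> x 5 = x 6 \<and> x 6 = x 7 \<and> y 5 = y 6 \<and> y 6 = y 7"
  proof
    assume "x 5 + x 6 + x 7 > 0 \<and> y 5 + y 6 + y 7 > 0"
    moreover have "good e (y 5) (y 6) (y 7) (x 5) (x 6) (x 7)"
      unfolding good_def using BX[of 5 6, unfolded rvU] BX[of 5 7, unfolded rvU] BX[of 6 5, unfolded rvU] BX[of 6 7, unfolded rvU] BX[of 7 5, unfolded rvU] BX[of 7 6, unfolded rvU]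
        BY[of 5 6, unfolded rvU] BY[of 5 7, unfolded rvU] BY[of 6 5, unfolded rvU] BY[of 6 7, unfolded rvU] BY[of 7 5, unfolded rvU] BY[of 7 6, unfolded rvU]
      by (simp add: algebra_simps)
    ultimately have "y 5 = y 6 \<and> y 6 = y 7 \<and> x 5 = x 6 \<and> x 6 = x 7"
      using core[OF _ e0] nx ny by auto
    then show "x 5 = x 6 \<and> x 6 = x 7 \<and> y 5 = y 6 \<and> y 6 = y 7" by simp
  qed
  from c1 c2 show "(x 1 + x 2 + x 3 > 0 \<and> y 1 + y 2 + y 3 > 0 \<longrightarrow> x 1 = x 2 \<and> x 2 = x 3 \<and> y 1 = y 2 \<and> y 2 = y 3) \<and> (x 5 + x 6 + x 7 > 0 \<and> y 5 + y 6 + y 7 > 0 \<longrightarrow> x 5 = x 6 \<and> x 6 = x 7 \<and> y 5 = y 6 \<and> y 6 = y 7)" by blast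
qed

end
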